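(* For $Q$ symmetric positive definite, as $\|\gamma\|\to\infty$ ($\gamma\in\mathbb{R}^{k_2}$), $f_{\infty,\gamma}(t)\to f_{\infty,\infty}(t)$ for every $t\in\mathbb{R}^k$, hence also $\int|f_{\infty,\gamma}-f_{\infty,\infty}|\to0$, and the corresponding cdfs converge in total variation to the cdf of $N(0,\sigma^2Q^{-1})$.
   Context: $k=k_1+k_2$, $k_1,k_2\ge1$, $\sigma>0$, $\alpha>0$, $Q$ a symmetric positive definite $k\times k$ matrix partitioned into blocks $Q_{11}$ ($k_1\times k_1$), $Q_{12}$, $Q_{21}$, $Q_{22}$ ($k_2\times k_2$). $f_{\infty,\infty}$ is the $N(0,\sigma^2Q^{-1})$ density. For $t=(t_1',t_2')'$, with $D_{\infty2}=(Q_{22}-Q_{21}Q_{11}^{-1}Q_{12})^{-1/2}$, $w=D_{\infty2}^{-1}(t_2+\gamma)$, $G=g(\|w\|)$: $f_{\infty,\gamma}(t)=(2\pi\sigma^2)^{-k/2}[\det Q]^{1/2}\exp(-\tfrac1{2\sigma^2}\|Q_{11}^{1/2}t_1+Q_{11}^{-1/2}Q_{12}t_2\|^2)[1+\exp(-\alpha\sigma^{-2}G^2+2\alpha k_2)]^{k_2}\{1+2\alpha\sigma^{-2}G^2[1+\exp(\alpha\sigma^{-2}G^2-2\alpha k_2)]^{-1}\}^{-1}\exp(-\tfrac1{2\sigma^2}\|G\,w/\|w\|-D_{\infty2}^{-1}\gamma\|^2)$ (with $Gw/\|w\|=0$ if $w=0$). Here $A^{1/2}$ is the symmetric positive definite root,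 and $g$ is the inverse of the bijection $h:[0,\infty)\to[0,\infty)$, $h(\xi)=[1+a\exp(-\xi^2/b)]^{-1}\xi$ with $a=\exp(2\alpha k_2)$, $b=\sigma^2/\alpha$. *)

theory Defs
  imports "HOL-Analysis.Analysis"
begin

definition pos_def_mat :: "real^'n^'n \<Rightarrow> bool" where
  "pos_def_mat A \<longleftrightarrow> transpose A = A \<and> (\<forall>x. x \<noteq> 0 \<longrightarrow> x \<bullet> (A *v x) > 0)"

definition mat_sqrt :: "real^'n^'n \<Rightarrow> real^'n^'n" where
  "mat_sqrt A = (THE B. pos_def_mat B \<and> B ** B = A)"

definition mat_isqrt :: "real^'n^'n \<Rightarrow> real^'n^'n" where
  "mat_isqrt A = matrix_inv (mat_sqrt A)"

definition blk11 :: "real^('a::finite+'b::finite)^('a+'b) \<Rightarrow> real^'a^'a" where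
  "blk11 Q = (\<chi> i j. Q $ Inl i $ Inl j)"
definition blk12 :: "real^('a::finite+'b::finite)^('a+'b) \<Rightarrow> real^'b^'a" where
  "blk12 Q = (\<chi> i j. Q $ Inl i $ Inr j)"
definition blk21 :: "real^('a::finite+'b::finite)^('a+'b) \<Rightarrow> real^'a^'b" where
  "blk21 Q = (\<chi> i j. Q $ Inr i $ Inl j)"
definition blk22 :: "real^('a::finite+'b::finite)^('a+'b) \<Rightarrow> real^'b^'b" where
  "blk22 Q = (\<chi> i j. Q $ Inr i $ Inr j)"

definition joinv :: "real^'a::finite \<Rightarrow> real^'b::finite \<Rightarrow> real^('a+'b)" where
  "joinv t1 t2 = (\<chi> i. case i of Inl j \<Rightarrow> t1 $ j | Inr j \<Rightarrow> t2 $ j)"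

definition hfun :: "real \<Rightarrow> real \<Rightarrow> real \<Rightarrow> real" where
  "hfun a b \<xi> = \<xi> / (1 + a * exp (-(\<xi>\<^sup>2) / b))"
definition gfun :: "real \<Rightarrow> real \<Rightarrow> real \<Rightarrow> real" where
  "gfun a b y = (THE \<xi>. \<xi> \<ge> 0 \<and> hfun a b \<xi> = y)"

text \<open>f_{inf,inf}: the N(0, sigma^2 Q^(-1)) density at t = (t1,t2).\<close>
definition f_inf_inf :: "real \<Rightarrow> real^('a::finite+'b::finite)^('a+'b) \<Rightarrow> (real^'a) \<times> (real^'b) \<Rightarrow> real" where
  "f_inf_inf \<sigma> Q t =
     (let x = joinv (fst t) (snd t); k = CARD('a) + CARD('b) in
      (2 * pi * \<sigma>\<^sup>2) powr (- real k / 2) * sqrt (det Q) * exp (- (x \<bullet> (Q *v x)) / (2 * \<sigma>\<^sup>2)))"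

definition f_inf_gamma :: "real \<Rightarrow> real \<Rightarrow> real^('a::finite+'b::finite)^('a+'b) \<Rightarrow> real^'b \<Rightarrow> (real^'a) \<times> (real^'b) \<Rightarrow> real" where
  "f_inf_gamma \<sigma> \<alpha> Q \<gamma> t =
     (let t1 = fst t; t2 = snd t;
          k1 = CARD('a); k2 = CARD('b); k = k1 + k2;
          Q11 = blk11 Q; Q12 = blk12 Q; Q21 = blk21 Q; Q22 = blk22 Q;
          Dinv = mat_sqrt (Q22 - Q21 ** matrix_inv Q11 ** Q12);
          w = Dinv *v (t2 + \<gamma>);
          a = exp (2 * \<alpha> * real k2); b = \<sigma>\<^sup>2 / \<alpha>;
          G = gfun a b (norm w)
      in (2 * pi * \<sigma>\<^sup>2) powr (- real k / 2) * sqrt (det Q)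
         * exp (- (norm (mat_sqrt Q11 *v t1 + mat_isqrt Q11 *v (Q12 *v t2)))\<^sup>2 / (2 * \<sigma>\<^sup>2))
         * (1 + exp (- \<alpha> * G\<^sup>2 / \<sigma>\<^sup>2 + 2 * \<alpha> * real k2)) ^ k2
         * inverse (1 + 2 * \<alpha> * G\<^sup>2 / \<sigma>\<^sup>2
                      * inverse (1 + exp (\<alpha> * G\<^sup>2 / \<sigma>\<^sup>2 - 2 * \<alpha> * real k2)))
         * exp (- (norm ((if w = 0 then 0 else scaleR (G / norm w) w) - Dinv *v \<gamma>))\<^sup>2 / (2 * \<sigma>\<^sup>2)))"

definition tv_dist :: "'c::topological_space measure \<Rightarrow> 'c measure \<Rightarrow> real" where
  "tv_dist M N = (SUP A \<in> sets borel. \<bar>measure M A - measure N A\<bar>)"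

end

theory Submission
  imports Defs "HOL-Probability.Distributions"
begin

lemma symm_inner:
  fixes A :: "real^'n^'n"
  assumes "transpose A = A" shows "(A *v x) \<bullet> y = x \<bullet> (A *v y)"
  by (metis assms dot_lmul_matrix vector_transpose_matrix)

lemma symm_from_inner:
  fixes A :: "real^'n^'n"
  assumes "\<And>x y. (A *v x) \<bullet> y = x \<bullet> (A *v y)" shows "transpose A = A"
proof -
  have "transpose A *v y = A *v y" for y
  proof -
    have "x \<bullet> (transpose A *v y) = x \<bullet> (A *v y)" for x
      by (metis assms dot_lmul_matrix inner_commute transpose_matrix_vector)
    then have "(transpose A *v y - A *v y) \<bullet> (transpose A *v y - A *v y) = 0"
      by (metis inner_diff_right right_minus_eq)
    then show ?thesis by simp
  qed
  then show ?thesis by (simp add: matrix_eq)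
qed

lemma quad_zero:
  fixes B c :: real
  assumes "\<And>t. 0 \<le> 2*t*B + t^2*c" shows "B = 0"
proof (rule ccontr)
  assume "B \<noteq> 0"
  define d where "d = \<bar>c\<bar> + 1"
  define t where "t = - B / d"
  have p: "d > 0" unfolding d_def by simp
  have "0 \<le> 2*t*B + t^2*c" by (rule assms)
  then have "0 \<le> (2*t*B + t^2*c) * d^2" by simp
  also have "(2*t*B + t^2*c) * d^2 = B^2 * (c - 2*d)"
    using p unfolding t_def by (simp add: field_simps power2_eq_square)
  also have "\<dots> = B^2 * (c - 2*\<bar>c\<bar> - 2)" unfolding d_def by simp
  also have "\<dots> < 0"
  proof -
    have "B^2 > 0" using \<open>B \<noteq> 0\<close> by simp
    moreover have "c - 2*\<bar>c\<bar> - 2 < 0" by linarith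
    ultimately show ?thesis by (simp add: mult_pos_neg)
  qed
  finally show False by simp
qed

lemma eig_in_subspace:
  fixes A :: "real^'n^'n"
  assumes sym: "transpose A = A" and V: "subspace V" and inv: "\<And>x. x\<in>V \<Longrightarrow> A *v x \<in> V"
    and ne: "x0 \<in> V" "x0 \<noteq> 0"
  shows "\<exists>v\<in>V. norm v = 1 \<and> A *v v = (v \<bullet> (A *v v)) *\<^sub>R v"
proof -
  define q where "q x = x \<bullet> (A *v x)" for x
  let ?S = "V \<inter> sphere 0 1"
  have cS: "compact ?S"
    by (intro closed_Int_compact closed_subspace V compact_sphere)
  have "x0 /\<^sub>R norm x0 \<in> ?S" using ne V by (simp add: subspace_scale)
  then have neS: "?S \<noteq> {}" by blast
  have cont: "continuous_on ?S q" unfolding q_def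
    by (intro continuous_intros linear_continuous_on) (simp add: linear_conv_bounded_linear)
  obtain v where v: "v \<in> ?S" and vmax: "\<And>y. y \<in> ?S \<Longrightarrow> q y \<le> q v"
    using continuous_attains_sup[OF cS neS cont] by blast
  define l where "l = q v"
  have vV: "v \<in> V" and nv: "norm v = 1" using v by auto
  have le: "q x \<le> l * (x \<bullet> x)" if "x \<in> V" for x
  proof (cases "x = 0")
    case True then show ?thesis by (simp add: q_def)
  next
    case False
    have "x /\<^sub>R norm x \<in> ?S" using False that V by (simp add: subspace_scale)
    then have "q (x /\<^sub>R norm x) \<le> l" using vmax l_def by blast
    moreover have "q (x /\<^sub>R norm x) = q x / (norm x)^2"
      by (simp add: q_def matrix_vector_mult_scaleR power2_eq_square divide_inverse)
    ultimately have "q x / (norm x)^2 \<le> l" by simp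
    then have "q x \<le> l * (norm x)^2" using False by (simp add: divide_le_eq)
    then show ?thesis by (simp add: power2_norm_eq_inner)
  qed
  have key: "w \<bullet> (l *\<^sub>R v - A *v v) = 0" if wV: "w \<in> V" for w
  proof -
    define B where "B = w \<bullet> (l *\<^sub>R v - A *v v)"
    define c where "c = l * (w \<bullet> w) - q w"
    have "0 \<le> 2*t*B + t^2*c" for t
    proof -
      have inV: "v + t *\<^sub>R w \<in> V" using V vV wV by (simp add: subspace_add subspace_scale)
      have e1: "q (v + t *\<^sub>R w) = q v + 2 * t * (w \<bullet> (A *v v)) + t^2 * q w"
      proof -
        have s: "v \<bullet> (A *v w) = w \<bullet> (A *v v)"
          by (metis inner_commute sym symm_inner)
        show ?thesis unfolding q_def
          by (simp add: matrix_vector_right_distrib matrix_vector_mult_scaleR inner_add_left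
              inner_add_right s power2_eq_square algebra_simps)
      qed
      have e2: "(v + t *\<^sub>R w) \<bullet> (v + t *\<^sub>R w) = 1 + 2 * t * (v \<bullet> w) + t^2 * (w \<bullet> w)"
      proof -
        have "v \<bullet> v = 1" using nv by (simp add: norm_eq_1)
        then show ?thesis
          by (simp add: inner_add_left inner_add_right inner_commute power2_eq_square algebra_simps)
      qed
      have "q (v + t *\<^sub>R w) \<le> l * ((v + t *\<^sub>R w) \<bullet> (v + t *\<^sub>R w))" by (rule le[OF inV])
      then show ?thesis unfolding e1 e2 B_def c_def l_def
        by (simp add: inner_diff_right algebra_simps inner_commute)
    qed
    then show ?thesis using quad_zero B_def by blast
  qed
  have "l *\<^sub>R v - A *v v \<in> V" using V vV inv by (simp add: subspace_diff subspace_scale)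
  from key[OF this] have "l *\<^sub>R v - A *v v = 0" by simp
  then have "A *v v = l *\<^sub>R v" by simp
  then show ?thesis using vV nv unfolding l_def q_def by auto
qed

lemma orth_sum_inner:
  fixes E :: "(real^'n) set"
  assumes "finite E" "pairwise orthogonal E" "e' \<in> E" "norm e' = 1"
  shows "e' \<bullet> (\<Sum>e\<in>E. c e *\<^sub>R e) = c e'"
proof -
  have "e' \<bullet> (\<Sum>e\<in>E. c e *\<^sub>R e) = (\<Sum>e\<in>E. c e * (e' \<bullet> e))"
    by (simp add: inner_sum_right)
  also have "\<dots> = (\<Sum>e\<in>E. if e = e' then c e' else 0)"
  proof (rule sum.cong)
    fix e assume "e \<in> E"
    show "c e * (e' \<bullet> e) = (if e = e' then c e' else 0)"
    proof (cases "e = e'")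
      case True then show ?thesis using assms(4) by (simp add: norm_eq_1)
    next
      case False then have "orthogonal e' e" using assms(2,3) \<open>e\<in>E\<close> by (auto simp: pairwise_def)
      then show ?thesis using False by (simp add: orthogonal_def)
    qed
  qed simp
  also have "\<dots> = c e'" using assms(1,3) by simp
  finally show ?thesis .
qed

lemma spectral:
  fixes A :: "real^'n^'n"
  assumes sym: "transpose A = A"
  shows "\<exists>E. finite E \<and> (\<forall>e\<in>E. norm e = 1 \<and> A *v e = (e \<bullet> (A *v e)) *\<^sub>R e)
            \<and> pairwise orthogonal E \<and> (\<forall>x. x = (\<Sum>e\<in>E. (e \<bullet> x) *\<^sub>R e))"
proof -
  define P where "P E \<longleftrightarrow> (\<forall>e\<in>E. norm e = 1 \<and> A *v e = (e \<bullet> (A *v e)) *\<^sub>R e) \<and> pairwise orthogonal E"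
    for E :: "(real^'n) set"
  have PI: "finite E \<and> card E \<le> DIM(real^'n)" if "P E" for E
  proof -
    have "0 \<notin> E" using that unfolding P_def by force
    then have "independent E" using that unfolding P_def by (intro pairwise_orthogonal_independent) auto
    then show ?thesis by (rule independent_bound)
  qed
  have "P {}" unfolding P_def by simp
  moreover have "\<forall>E. P E \<longrightarrow> card E < DIM(real^'n) + 1" using PI by (simp add: le_imp_less_Suc)
  ultimately obtain E where PE: "P E" and Emax: "\<And>E'. P E' \<Longrightarrow> card E' \<le> card E"
    using ex_has_greatest_nat[of P "{}" card "DIM(real^'n) + 1"] by blast
  have fE: "finite E" using PI[OF PE] by simp
  have unitE: "\<And>e. e \<in> E \<Longrightarrow> norm e = 1" and orthE: "pairwise orthogonal E"
    and eigE: "\<And>e. e \<in> E \<Longrightarrow> A *v e = (e \<bullet> (A *v e)) *\<^sub>R e"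
    using PE unfolding P_def by auto
  have expand: "x = (\<Sum>e\<in>E. (e \<bullet> x) *\<^sub>R e)" for x
  proof (rule ccontr)
    assume nz: "x \<noteq> (\<Sum>e\<in>E. (e \<bullet> x) *\<^sub>R e)"
    define z where "z = x - (\<Sum>e\<in>E. (e \<bullet> x) *\<^sub>R e)"
    define W where "W = {y. \<forall>e\<in>E. e \<bullet> y = 0}"
    have sW: "subspace W" unfolding W_def subspace_def
      by (simp add: inner_add_right)
    have iW: "A *v y \<in> W" if "y \<in> W" for y
    proof -
      have "e \<bullet> (A *v y) = 0" if "e \<in> E" for e
      proof -
        have "e \<bullet> (A *v y) = (A *v e) \<bullet> y" using symm_inner[OF sym] by simp
        also have "\<dots> = (e \<bullet> (A *v e)) * (e \<bullet> y)" by (metis eigE[OF that] inner_scaleR_left)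
        also have "\<dots> = 0" using \<open>y \<in> W\<close> that unfolding W_def by simp
        finally show ?thesis .
      qed
      then show ?thesis unfolding W_def by simp
    qed
    have zW: "z \<in> W" unfolding W_def z_def
      using orth_sum_inner[OF fE orthE _ unitE] by (simp add: inner_diff_right)
    have z0: "z \<noteq> 0" using nz unfolding z_def by simp
    obtain u where uW: "u \<in> W" and nu: "norm u = 1" and eu: "A *v u = (u \<bullet> (A *v u)) *\<^sub>R u"
      using eig_in_subspace[OF sym sW iW zW z0] by blast
    have uE: "u \<notin> E"
    proof
      assume "u \<in> E"
      then have "u \<bullet> u = 0" using uW unfolding W_def by simp
      then show False using nu by simp
    qed
    have "P (insert u E)" unfolding P_def
    proof (intro conjI)
      show "\<forall>e\<in>insert u E. norm e = 1 \<and> A *v e = (e \<bullet> (A *v e)) *\<^sub>R e"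
        using nu eu unitE eigE by auto
      show "pairwise orthogonal (insert u E)"
      proof (rule pairwise_insert[THEN iffD2], rule conjI[OF _ orthE], intro allI impI)
        fix y assume "y \<in> E \<and> y \<noteq> u"
        then have "y \<bullet> u = 0" using uW unfolding W_def by simp
        then show "orthogonal u y \<and> orthogonal y u" by (simp add: orthogonal_def inner_commute)
      qed
    qed
    then have "card (insert u E) \<le> card E" by (rule Emax)
    then show False using uE fE by simp
  qed
  show ?thesis using fE unitE eigE orthE expand by blast
qed

lemma pd_sym: "pos_def_mat A \<Longrightarrow> transpose A = A"
  by (simp add: pos_def_mat_def)

lemma pd_pos: "pos_def_mat A \<Longrightarrow> x \<noteq> 0 \<Longrightarrow> x \<bullet> (A *v x) > 0"
  by (simp add: pos_def_mat_def)

lemma mv_sum: "(A::real^'n^'m) *v (\<Sum>e\<in>E. g e) = (\<Sum>e\<in>E. A *v g e)"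
  by (rule real_vector.linear_sum[OF matrix_vector_mul_linear])

lemma pd_sqrt_exists:
  fixes A :: "real^'n^'n"
  assumes pd: "pos_def_mat A"
  shows "\<exists>B. pos_def_mat B \<and> B ** B = A"
proof -
  obtain E where fE: "finite E" and unitE: "\<And>e. e\<in>E \<Longrightarrow> norm e = 1"
    and eigE: "\<And>e. e\<in>E \<Longrightarrow> A *v e = (e \<bullet> (A *v e)) *\<^sub>R e"
    and orthE: "pairwise orthogonal E" and expand: "\<And>x. x = (\<Sum>e\<in>E. (e \<bullet> x) *\<^sub>R e)"
    using spectral[OF pd_sym[OF pd]] by blast
  define l where "l e = e \<bullet> (A *v e)" for e
  have lpos: "l e > 0" if "e \<in> E" for e
  proof -
    have "e \<noteq> 0" using unitE[OF that] by auto
    then show ?thesis unfolding l_def using pd_pos[OF pd] by blast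
  qed
  define f where "f x = (\<Sum>e\<in>E. (sqrt (l e) * (e \<bullet> x)) *\<^sub>R e)" for x
  have lin: "linear f"
    by (rule linearI) (simp_all add: f_def inner_add_right algebra_simps sum.distrib scaleR_sum_right)
  define B where "B = matrix f"
  have Bx: "B *v x = f x" for x
    using lin by (simp add: B_def matrix_works linear_matrix_vector_mul_eq)
  have inf: "e \<bullet> f x = sqrt (l e) * (e \<bullet> x)" if "e \<in> E" for e x
    unfolding f_def by (rule orth_sum_inner[OF fE orthE that unitE[OF that]])
  have finner: "f x \<bullet> y = (\<Sum>e\<in>E. sqrt (l e) * (e \<bullet> x) * (e \<bullet> y))" for x y
    unfolding f_def by (simp add: inner_sum_left)
  have symB: "transpose B = B"
  proof (rule symm_from_inner)
    fix x y
    have "(B *v x) \<bullet> y = f x \<bullet> y" by (simp add: Bx)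
    also have "\<dots> = f y \<bullet> x" unfolding finner by (simp add: mult_ac)
    also have "\<dots> = x \<bullet> (B *v y)" by (simp add: Bx inner_commute)
    finally show "(B *v x) \<bullet> y = x \<bullet> (B *v y)" .
  qed
  have pdB: "pos_def_mat B" unfolding pos_def_mat_def
  proof (intro conjI symB allI impI)
    fix x :: "real^'n" assume "x \<noteq> 0"
    have "\<exists>e\<in>E. e \<bullet> x \<noteq> 0"
    proof (rule ccontr)
      assume "\<not> ?thesis"
      then have "(\<Sum>e\<in>E. (e \<bullet> x) *\<^sub>R e) = 0" by simp
      then show False using expand[of x] \<open>x \<noteq> 0\<close> by simp
    qed
    then obtain e0 where e0: "e0 \<in> E" "e0 \<bullet> x \<noteq> 0" by blast
    have "x \<bullet> (B *v x) = (\<Sum>e\<in>E. sqrt (l e) * (e \<bullet> x) * (e \<bullet> x))"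
      using finner[of x x] by (simp add: Bx inner_commute)
    also have "\<dots> > 0"
    proof (rule sum_pos2[OF fE e0(1)])
      show "0 < sqrt (l e0) * (e0 \<bullet> x) * (e0 \<bullet> x)"
      proof -
        have "0 < (e0 \<bullet> x) * (e0 \<bullet> x)" using e0(2) by (auto simp add: zero_less_mult_iff linorder_neq_iff)
        then show ?thesis using lpos[OF e0(1)] by (simp add: mult.assoc)
      qed
      fix e assume "e \<in> E"
      then show "0 \<le> sqrt (l e) * (e \<bullet> x) * (e \<bullet> x)"
        using lpos[of e] by (simp add: mult.assoc less_imp_le)
    qed
    finally show "x \<bullet> (B *v x) > 0" .
  qed
  have "(B ** B) *v x = A *v x" for x
  proof -
    have "(B ** B) *v x = f (f x)" by (simp add: Bx flip: matrix_vector_mul_assoc)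
    also have "\<dots> = (\<Sum>e\<in>E. (l e * (e \<bullet> x)) *\<^sub>R e)"
      unfolding f_def[of "f x"]
      by (rule sum.cong) (simp_all add: inf lpos less_imp_le mult.assoc flip: real_sqrt_mult)
    also have "\<dots> = A *v x"
    proof -
      have "A *v x = A *v (\<Sum>e\<in>E. (e \<bullet> x) *\<^sub>R e)" using expand[of x] by simp
      also have "\<dots> = (\<Sum>e\<in>E. (e \<bullet> x) *\<^sub>R (A *v e))"
        by (simp add: mv_sum matrix_vector_mult_scaleR)
      also have "\<dots> = (\<Sum>e\<in>E. (l e * (e \<bullet> x)) *\<^sub>R e)"
        by (rule sum.cong[OF refl]) (metis eigE l_def scaleR_scaleR mult.commute)
      finally show ?thesis by simp
    qed
    finally show ?thesis .
  qed
  then have "B ** B = A" by (simp add: matrix_eq)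
  then show ?thesis using pdB by blast
qed

lemma pd_sqrt_unique:
  fixes B C :: "real^'n^'n"
  assumes pB: "pos_def_mat B" and pC: "pos_def_mat C" and eq: "B ** B = C ** C"
  shows "B = C"
proof -
  define D where "D = B - C"
  have symD: "transpose D = D"
    by (rule symm_from_inner) (simp add: D_def matrix_vector_mult_diff_rdistrib inner_diff_left
        inner_diff_right symm_inner[OF pd_sym[OF pB]] symm_inner[OF pd_sym[OF pC]])
  obtain E where fE: "finite E" and unitE: "\<And>e. e\<in>E \<Longrightarrow> norm e = 1"
    and eigE: "\<And>e. e\<in>E \<Longrightarrow> D *v e = (e \<bullet> (D *v e)) *\<^sub>R e"
    and expand: "\<And>x. x = (\<Sum>e\<in>E. (e \<bullet> x) *\<^sub>R e)"
    using spectral[OF symD] by blast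
  have De: "D *v e = 0" if eE: "e \<in> E" for e
  proof -
    define m where "m = e \<bullet> (D *v e)"
    have Dm: "D *v e = m *\<^sub>R e" using eigE[OF eE] m_def by simp
    have e0: "e \<noteq> 0" using unitE[OF eE] by auto
    have "D *v (B *v e) + C *v (D *v e) = B *v (B *v e) - C *v (C *v e)"
      by (simp add: D_def matrix_vector_mult_diff_rdistrib matrix_vector_mult_diff_distrib)
    also have "\<dots> = 0" by (simp add: matrix_vector_mul_assoc eq)
    finally have z: "D *v (B *v e) + C *v (D *v e) = 0" .
    have "e \<bullet> (D *v (B *v e)) = (D *v e) \<bullet> (B *v e)" by (simp add: symm_inner[OF symD])
    also have "\<dots> = m * (e \<bullet> (B *v e))" by (simp add: Dm)
    finally have t1: "e \<bullet> (D *v (B *v e)) = m * (e \<bullet> (B *v e))" .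
    have t2: "e \<bullet> (C *v (D *v e)) = m * (e \<bullet> (C *v e))" by (simp add: Dm matrix_vector_mult_scaleR)
    have "m * (e \<bullet> (B *v e) + e \<bullet> (C *v e)) = 0"
      using arg_cong[OF z, of "\<lambda>v. e \<bullet> v"] t1 t2 by (simp add: inner_add_right distrib_left)
    moreover have "e \<bullet> (B *v e) + e \<bullet> (C *v e) > 0"
      using pd_pos[OF pB e0] pd_pos[OF pC e0] by simp
    ultimately have "m = 0" by simp
    then show ?thesis using Dm by simp
  qed
  have "D *v x = 0 *v x" for x
  proof -
    have "D *v x = D *v (\<Sum>e\<in>E. (e \<bullet> x) *\<^sub>R e)" using expand[of x] by simp
    also have "\<dots> = 0" by (simp add: mv_sum matrix_vector_mult_scaleR De)
    finally show ?thesis by simp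
  qed
  then have "D = 0" by (simp add: matrix_eq)
  then show ?thesis unfolding D_def by simp
qed

lemma mat_sqrt_props:
  fixes A :: "real^'n^'n"
  assumes "pos_def_mat A"
  shows "pos_def_mat (mat_sqrt A) \<and> mat_sqrt A ** mat_sqrt A = A"
proof -
  have "\<exists>!B. pos_def_mat B \<and> B ** B = A"
    using pd_sqrt_exists[OF assms] pd_sqrt_unique by blast
  then show ?thesis unfolding mat_sqrt_def by (rule theI')
qed

lemma pd_invertible:
  fixes A :: "real^'n^'n"
  assumes "pos_def_mat A"
  shows "invertible A" "matrix_inv A ** A = mat 1" "A ** matrix_inv A = mat 1"
proof -
  have "\<forall>x. A *v x = 0 \<longrightarrow> x = 0" using pd_pos[OF assms] by force
  then show inv: "invertible A" by (simp add: invertible_left_inverse matrix_left_invertible_ker)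
  then have "A ** matrix_inv A = mat 1 \<and> matrix_inv A ** A = mat 1"
    unfolding invertible_def matrix_inv_def by (rule someI_ex)
  then show "matrix_inv A ** A = mat 1" "A ** matrix_inv A = mat 1" by auto
qed


lemma sum_UNIV_Plus:
  "(\<Sum>i\<in>(UNIV::('a::finite + 'b::finite) set). g i) = (\<Sum>j\<in>UNIV. g (Inl j)) + (\<Sum>j\<in>UNIV. g (Inr j))"
proof -
  have "(\<Sum>i\<in>(UNIV::('a + 'b) set). g i) = (\<Sum>i\<in>(UNIV <+> UNIV). g i)" by simp
  also have "\<dots> = (\<Sum>j\<in>UNIV. g (Inl j)) + (\<Sum>j\<in>UNIV. g (Inr j))"
    by (subst sum.Plus) (simp_all add: o_def)
  finally show ?thesis .
qed

lemma joinv_Inl [simp]: "joinv t1 t2 $ Inl j = t1 $ j"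
  by (simp add: joinv_def)

lemma joinv_Inr [simp]: "joinv t1 t2 $ Inr j = t2 $ j"
  by (simp add: joinv_def)

lemma join_inner: "joinv a b \<bullet> joinv c d = a \<bullet> c + b \<bullet> d"
  by (simp add: inner_vec_def sum_UNIV_Plus)

lemma join_mult:
  fixes Q :: "real^('a::finite+'b::finite)^('a+'b)"
  shows "Q *v joinv t1 t2 = joinv (blk11 Q *v t1 + blk12 Q *v t2) (blk21 Q *v t1 + blk22 Q *v t2)"
proof -
  have "(Q *v joinv t1 t2) $ i = joinv (blk11 Q *v t1 + blk12 Q *v t2) (blk21 Q *v t1 + blk22 Q *v t2) $ i" for i
    by (cases i) (simp_all add: matrix_vector_mult_def sum_UNIV_Plus blk11_def blk12_def blk21_def blk22_def)
  then show ?thesis by (simp add: vec_eq_iff)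
qed

lemma join_add: "joinv a b + joinv c d = joinv (a + c) (b + d)"
  by (simp add: vec_eq_iff joinv_def split: sum.split)

lemma join_zero_iff: "joinv a b = 0 \<longleftrightarrow> a = 0 \<and> b = 0"
proof
  assume "joinv a b = 0"
  then have "\<forall>i. joinv a b $ i = 0" by simp
  then show "a = 0 \<and> b = 0" unfolding vec_eq_iff by (metis joinv_Inl joinv_Inr zero_index)
qed (simp add: vec_eq_iff joinv_def split: sum.split)

lemma mv_minus: "(A::real^'n^'m) *v (- x) = - (A *v x)"
  using matrix_vector_mult_scaleR[of A "-1" x] by simp

lemma join_norm: "norm (joinv a b) = norm (a, b)"
  by (simp add: norm_Pair norm_eq_sqrt_inner join_inner)

lemma join_quad:
  fixes Q :: "real^('a::finite+'b::finite)^('a+'b)"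
  shows "joinv t1 t2 \<bullet> (Q *v joinv t1 t2)
    = t1 \<bullet> (blk11 Q *v t1) + t1 \<bullet> (blk12 Q *v t2) + t2 \<bullet> (blk21 Q *v t1) + t2 \<bullet> (blk22 Q *v t2)"
  by (simp add: join_mult join_inner inner_add_right)

lemma blk_sym:
  fixes Q :: "real^('a::finite+'b::finite)^('a+'b)"
  assumes "transpose Q = Q"
  shows "(blk12 Q *v b) \<bullet> c = b \<bullet> (blk21 Q *v c)"
    and "(blk11 Q *v a) \<bullet> c = a \<bullet> (blk11 Q *v c)"
    and "(blk22 Q *v b) \<bullet> d = b \<bullet> (blk22 Q *v d)"
proof -
  note s = symm_inner[OF assms]
  show "(blk12 Q *v b) \<bullet> c = b \<bullet> (blk21 Q *v c)"
    using s[of "joinv 0 b" "joinv c 0"] by (simp add: join_mult join_inner inner_commute)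
  show "(blk11 Q *v a) \<bullet> c = a \<bullet> (blk11 Q *v c)"
    using s[of "joinv a 0" "joinv c 0"] by (simp add: join_mult join_inner inner_commute)
  show "(blk22 Q *v b) \<bullet> d = b \<bullet> (blk22 Q *v d)"
    using s[of "joinv 0 b" "joinv 0 d"] by (simp add: join_mult join_inner inner_commute)
qed

lemma blk11_pd:
  fixes Q :: "real^('a::finite+'b::finite)^('a+'b)"
  assumes "pos_def_mat Q" shows "pos_def_mat (blk11 Q)"
  unfolding pos_def_mat_def
proof (intro conjI allI impI)
  show "transpose (blk11 Q) = blk11 Q"
    by (rule symm_from_inner) (rule blk_sym(2)[OF pd_sym[OF assms]])
  fix x :: "real^'a" assume "x \<noteq> 0"
  then have "joinv x 0 \<noteq> (0::real^('a+'b))" by (simp add: join_zero_iff)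
  from pd_pos[OF assms this] show "x \<bullet> (blk11 Q *v x) > 0"
    by (simp add: join_mult join_inner)
qed

lemma inv_sym:
  fixes M :: "real^'n^'n"
  assumes "pos_def_mat M"
  shows "(matrix_inv M *v x) \<bullet> y = x \<bullet> (matrix_inv M *v y)"
proof -
  note pi = pd_invertible[OF assms]
  have "y = M *v (matrix_inv M *v y)" by (simp add: matrix_vector_mul_assoc pi)
  then have "(matrix_inv M *v x) \<bullet> y = (matrix_inv M *v x) \<bullet> (M *v (matrix_inv M *v y))" by simp
  also have "\<dots> = (M *v (matrix_inv M *v x)) \<bullet> (matrix_inv M *v y)"
    by (simp add: symm_inner[OF pd_sym[OF assms]])
  also have "\<dots> = x \<bullet> (matrix_inv M *v y)" by (simp add: matrix_vector_mul_assoc pi)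
  finally show ?thesis .
qed

definition schur :: "real^('a::finite+'b::finite)^('a+'b) \<Rightarrow> real^'b^'b" where
  "schur Q = blk22 Q - blk21 Q ** matrix_inv (blk11 Q) ** blk12 Q"

lemma schur_quad:
  fixes Q :: "real^('a::finite+'b::finite)^('a+'b)"
  assumes "pos_def_mat Q"
  shows "x \<bullet> (schur Q *v y) = x \<bullet> (blk22 Q *v y) - (blk12 Q *v x) \<bullet> (matrix_inv (blk11 Q) *v (blk12 Q *v y))"
  using blk_sym(1)[OF pd_sym[OF assms]]
  by (simp add: schur_def matrix_vector_mult_diff_rdistrib inner_diff_right
      flip: matrix_vector_mul_assoc)

lemma schur_pd:
  fixes Q :: "real^('a::finite+'b::finite)^('a+'b)"
  assumes pd: "pos_def_mat Q" shows "pos_def_mat (schur Q)"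
  unfolding pos_def_mat_def
proof (intro conjI allI impI)
  note pd11 = blk11_pd[OF pd]
  show "transpose (schur Q) = schur Q"
  proof (rule symm_from_inner)
    fix x y
    have "(schur Q *v x) \<bullet> y = y \<bullet> (schur Q *v x)" by (simp add: inner_commute)
    also have "\<dots> = x \<bullet> (schur Q *v y)"
    proof -
      have "y \<bullet> (blk22 Q *v x) = x \<bullet> (blk22 Q *v y)"
        by (metis blk_sym(3)[OF pd_sym[OF pd]] inner_commute)
      moreover have "(blk12 Q *v y) \<bullet> (matrix_inv (blk11 Q) *v (blk12 Q *v x))
          = (blk12 Q *v x) \<bullet> (matrix_inv (blk11 Q) *v (blk12 Q *v y))"
        by (metis inv_sym[OF pd11] inner_commute)
      ultimately show ?thesis unfolding schur_quad[OF pd] by simp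
    qed
    finally show "(schur Q *v x) \<bullet> y = x \<bullet> (schur Q *v y)" .
  qed
  fix t2 :: "real^'b" assume "t2 \<noteq> 0"
  define u where "u = blk12 Q *v t2"
  define t1 where "t1 = - (matrix_inv (blk11 Q) *v u)"
  have Qt1: "blk11 Q *v t1 = - u"
    by (simp add: t1_def matrix_vector_mul_assoc pd_invertible[OF pd11] mv_minus)
  have "joinv t1 t2 \<noteq> (0::real^('a+'b))" using \<open>t2 \<noteq> 0\<close> by (simp add: join_zero_iff)
  from pd_pos[OF pd this] have "0 < joinv t1 t2 \<bullet> (Q *v joinv t1 t2)" .
  also have "\<dots> = t2 \<bullet> (schur Q *v t2)"
    unfolding join_quad schur_quad[OF pd]
    using blk_sym(1)[OF pd_sym[OF pd], of t2 t1]
    by (simp add: Qt1 u_def[symmetric] inner_commute) (simp add: t1_def inner_commute)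
  finally show "t2 \<bullet> (schur Q *v t2) > 0" .
qed

lemma sqrt_sym: "pos_def_mat A \<Longrightarrow> (mat_sqrt A *v x) \<bullet> y = x \<bullet> (mat_sqrt A *v y)"
  using mat_sqrt_props pd_sym symm_inner by blast

lemma sqrt_sq: "pos_def_mat A \<Longrightarrow> mat_sqrt A *v (mat_sqrt A *v x) = A *v x"
  using mat_sqrt_props by (metis matrix_vector_mul_assoc)

lemma sqrt_norm_sq:
  assumes "pos_def_mat A" shows "(norm (mat_sqrt A *v x))^2 = x \<bullet> (A *v x)"
  by (simp add: power2_norm_eq_inner sqrt_sym[OF assms] sqrt_sq[OF assms])

lemma quad_identity:
  fixes Q :: "real^('a::finite+'b::finite)^('a+'b)"
  assumes pd: "pos_def_mat Q"
  shows "(norm (mat_sqrt (blk11 Q) *v t1 + mat_isqrt (blk11 Q) *v (blk12 Q *v t2)))^2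
         + (norm (mat_sqrt (schur Q) *v t2))^2 = joinv t1 t2 \<bullet> (Q *v joinv t1 t2)"
proof -
  note pd11 = blk11_pd[OF pd]
  define R where "R = mat_sqrt (blk11 Q)"
  define Ri where "Ri = matrix_inv R"
  define u where "u = blk12 Q *v t2"
  have pdR: "pos_def_mat R" using mat_sqrt_props[OF pd11] R_def by simp
  have RR: "R *v (R *v x) = blk11 Q *v x" for x using sqrt_sq[OF pd11] R_def by simp
  note Rinv = pd_invertible[OF pdR]
  have RRi: "R *v (Ri *v x) = x" for x by (simp add: Ri_def matrix_vector_mul_assoc Rinv)
  have RiRi: "Ri *v (Ri *v x) = matrix_inv (blk11 Q) *v x" for x
  proof -
    have "blk11 Q *v (Ri *v (Ri *v x)) = x" by (simp flip: RR add: RRi)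
    then have "matrix_inv (blk11 Q) *v (blk11 Q *v (Ri *v (Ri *v x))) = matrix_inv (blk11 Q) *v x" by simp
    then show ?thesis by (metis matrix_vector_mul_assoc pd_invertible(2)[OF pd11] matrix_vector_mul_lid)
  qed
  have e1: "(norm (R *v t1 + Ri *v u))^2 = t1 \<bullet> (blk11 Q *v t1) + 2 * (t1 \<bullet> u) + u \<bullet> (matrix_inv (blk11 Q) *v u)"
  proof -
    have a: "(R *v t1) \<bullet> (R *v t1) = t1 \<bullet> (blk11 Q *v t1)" by (simp add: symm_inner[OF pd_sym[OF pdR]] RR)
    have b: "(R *v t1) \<bullet> (Ri *v u) = t1 \<bullet> u" by (simp add: symm_inner[OF pd_sym[OF pdR]] RRi)
    have c: "(Ri *v u) \<bullet> (Ri *v u) = u \<bullet> (matrix_inv (blk11 Q) *v u)"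
      using inv_sym[OF pdR, of u "Ri *v u"] RiRi[of u] by (simp add: Ri_def)
    show ?thesis by (simp add: power2_norm_eq_inner inner_add_left inner_add_right a b c inner_commute)
  qed
  have e2: "(norm (mat_sqrt (schur Q) *v t2))^2 = t2 \<bullet> (blk22 Q *v t2) - u \<bullet> (matrix_inv (blk11 Q) *v u)"
    by (simp add: sqrt_norm_sq[OF schur_pd[OF pd]] schur_quad[OF pd] u_def)
  have e3: "joinv t1 t2 \<bullet> (Q *v joinv t1 t2) = t1 \<bullet> (blk11 Q *v t1) + 2 * (t1 \<bullet> u) + t2 \<bullet> (blk22 Q *v t2)"
    unfolding join_quad using blk_sym(1)[OF pd_sym[OF pd], of t2 t1] by (simp add: u_def inner_commute)
  show ?thesis unfolding mat_isqrt_def R_def[symmetric] Ri_def[symmetric] u_def[symmetric] e1 e2 e3 by simp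
qed

lemma pd_lower:
  fixes A :: "real^'n^'n"
  assumes "pos_def_mat A" shows "\<exists>e>0. \<forall>x. e * norm x \<le> norm (A *v x)"
proof -
  have "\<forall>x\<in>UNIV. A *v x = 0 \<longrightarrow> x = 0" using pd_pos[OF assms] by force
  then show ?thesis using injective_imp_isometric[of UNIV "(*v) A"] by auto
qed

lemma pd_quad_lower:
  fixes A :: "real^'n^'n"
  assumes pd: "pos_def_mat A" shows "\<exists>m>0. \<forall>x. m * (norm x)^2 \<le> x \<bullet> (A *v x)"
proof -
  have pR: "pos_def_mat (mat_sqrt A)" using mat_sqrt_props[OF pd] by simp
  obtain e where e: "e > 0" "\<And>x. e * norm x \<le> norm (mat_sqrt A *v x)" using pd_lower[OF pR] by blast
  have "e^2 * (norm x)^2 \<le> x \<bullet> (A *v x)" for x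
  proof -
    have "e^2 * (norm x)^2 = (e * norm x)^2" by (simp add: power_mult_distrib)
    also have "\<dots> \<le> (norm (mat_sqrt A *v x))^2" using e(1) e(2)[of x] by (intro power_mono) auto
    also have "\<dots> = x \<bullet> (A *v x)" by (rule sqrt_norm_sq[OF pd])
    finally show ?thesis .
  qed
  then show ?thesis using e(1) by (intro exI[of _ "e^2"]) auto
qed


lemma h_strict_mono:
  assumes a: "a > 0" and b: "b > 0" and xy: "0 \<le> x" "x < y"
  shows "hfun a b x < hfun a b y"
proof -
  have "x^2 \<le> y^2" using xy by (intro power_mono) auto
  then have "exp (-(y^2)/b) \<le> exp (-(x^2)/b)" using b by (simp add: divide_right_mono)
  then have d: "1 + a * exp (-(y^2)/b) \<le> 1 + a * exp (-(x^2)/b)" using a by simp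
  have p1: "0 < 1 + a * exp (-(y^2)/b)" using a by (simp add: add_pos_pos)
  have "x / (1 + a * exp (-(x^2)/b)) \<le> x / (1 + a * exp (-(y^2)/b))"
    using d p1 xy(1) by (intro divide_left_mono) auto
  also have "\<dots> < y / (1 + a * exp (-(y^2)/b))" using p1 xy by (simp add: divide_strict_right_mono)
  finally show ?thesis by (simp add: hfun_def)
qed

lemma h_le: "a > 0 \<Longrightarrow> 0 \<le> x \<Longrightarrow> hfun a b x \<le> x"
  unfolding hfun_def
  by (simp add: divide_le_eq add_pos_nonneg mult_le_cancel_left1 add_nonneg_nonneg)

lemma h_nonneg: "a > 0 \<Longrightarrow> 0 \<le> x \<Longrightarrow> 0 \<le> hfun a b x"
  unfolding hfun_def by (simp add: add_pos_nonneg)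

lemma h_cont:
  assumes a: "a > 0" and b: "b > 0" shows "continuous_on S (hfun a b)"
proof -
  have "\<And>x. 1 + a * exp x \<noteq> 0" using a by (smt (verit) exp_gt_zero mult_pos_pos)
  then show ?thesis unfolding hfun_def using b by (intro continuous_intros) auto
qed

lemma g_ex1:
  assumes a: "a > 0" and b: "b > 0" and y: "y \<ge> 0"
  shows "\<exists>!\<xi>. \<xi> \<ge> 0 \<and> hfun a b \<xi> = y"
proof -
  have "hfun a b ((1 + a) * y) \<ge> y"
  proof -
    have "exp (-(((1 + a) * y)^2)/b) \<le> 1" using b by simp
    then have "1 + a * exp (-(((1 + a) * y)^2)/b) \<le> 1 + a" using a by (simp add: mult_left_le)
    moreover have "0 < 1 + a * exp (-(((1 + a) * y)^2)/b)" using a by (simp add: add_pos_pos)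
    ultimately show ?thesis unfolding hfun_def using y a
      by (simp add: le_divide_eq mult_left_mono mult.commute)
  qed
  moreover have "hfun a b 0 \<le> y" using y by (simp add: hfun_def)
  moreover have "0 \<le> (1 + a) * y" using a y by simp
  ultimately obtain \<xi> where "\<xi> \<ge> 0" "hfun a b \<xi> = y"
    using IVT'[of "hfun a b" 0 y "(1 + a) * y"] h_cont[OF a b] by auto
  moreover have "\<xi>1 = \<xi>2" if "\<xi>1 \<ge> 0" "\<xi>2 \<ge> 0" "hfun a b \<xi>1 = y" "hfun a b \<xi>2 = y" for \<xi>1 \<xi>2
    using h_strict_mono[OF a b, of \<xi>1 \<xi>2] h_strict_mono[OF a b, of \<xi>2 \<xi>1] that
    by (cases "\<xi>1 < \<xi>2"; cases "\<xi>2 < \<xi>1") auto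
  ultimately show ?thesis by blast
qed

lemma g_props:
  assumes a: "a > 0" and b: "b > 0" and y: "y \<ge> 0"
  shows "gfun a b y \<ge> 0" "hfun a b (gfun a b y) = y"
  using theI'[OF g_ex1[OF assms]] unfolding gfun_def by auto

lemma g_ge:
  assumes a: "a > 0" and b: "b > 0" and y: "y \<ge> 0"
  shows "y \<le> gfun a b y"
  using h_le[OF a g_props(1)[OF assms], of b] g_props(2)[OF assms] by simp

lemma g_mono:
  assumes a: "a > 0" and b: "b > 0" and y: "0 \<le> y1" "y1 \<le> y2"
  shows "gfun a b y1 \<le> gfun a b y2"
proof (rule ccontr)
  assume "\<not> ?thesis"
  then have "hfun a b (gfun a b y2) < hfun a b (gfun a b y1)"
    using y by (intro h_strict_mono[OF a b] g_props(1)[OF a b]) auto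
  then show False using y g_props(2)[OF a b] by simp
qed

lemma g_close:
  assumes a: "a > 0" and b: "b > 0" and y: "y \<ge> 0"
  shows "gfun a b y - y \<le> a * (gfun a b y * exp (-((gfun a b y)^2)/b))"
proof -
  define G where "G = gfun a b y"
  define E where "E = exp (-(G^2)/b)"
  have G0: "G \<ge> 0" using g_props(1)[OF assms] G_def by simp
  have yG: "y = G / (1 + a * E)" using g_props(2)[OF assms] unfolding G_def E_def hfun_def by simp
  have p: "1 + a * E > 0" using a by (simp add: E_def add_pos_pos)
  have "G - y = G * (a * E) / (1 + a * E)" using p unfolding yG by (simp add: field_simps)
  also have "\<dots> \<le> G * (a * E)"
  proof -
    have nn: "0 \<le> G * (a * E)" using G0 a by (simp add: E_def)
    have "G * (a * E) * 1 \<le> G * (a * E) * (1 + a * E)" using nn a by (intro mult_left_mono) (auto simp: E_def)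
    then show ?thesis using p by (simp add: divide_le_eq)
  qed
  finally show ?thesis unfolding G_def[symmetric] E_def[symmetric] by (simp add: mult_ac)
qed

lemma xexp_bound:
  fixes b G :: real
  assumes b: "b > 0" and G: "G \<ge> 0"
  shows "G * exp (-(G^2)/b) \<le> 1 + b"
proof -
  have e: "1 + G^2/b \<le> exp (G^2/b)" by (rule exp_ge_add_one_self)
  have "G \<le> 1 + G^2"
  proof (cases "G \<le> 1")
    case True then show ?thesis by (smt (verit) zero_le_power2)
  next
    case False
    then have "G * 1 \<le> G * G" by (intro mult_left_mono) auto
    then show ?thesis by (simp add: power2_eq_square)
  qed
  also have "\<dots> \<le> (1 + b) * (1 + G^2/b)" using b by (simp add: field_simps)
  also have "\<dots> \<le> (1 + b) * exp (G^2/b)" using b e by (intro mult_left_mono) auto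
  finally have "G \<le> (1 + b) * exp (G^2/b)" .
  then show ?thesis by (simp add: exp_minus field_simps)
qed

lemma xexp_tendsto:
  fixes b :: real
  assumes b: "b > 0"
  shows "((\<lambda>G. G * exp (-(G^2)/b)) \<longlongrightarrow> 0) at_top"
proof (rule tendsto_sandwich[of "\<lambda>_. 0" _ _ "\<lambda>G::real. b * inverse G"])
  show "\<forall>\<^sub>F G in at_top. 0 \<le> G * exp (-(G^2)/b)"
    by (intro eventually_at_top_linorderI[of 0]) simp
  show "\<forall>\<^sub>F G in at_top. G * exp (-(G^2)/b) \<le> b * inverse G"
  proof (intro eventually_at_top_linorderI[of 1])
    fix G :: real assume G: "G \<ge> 1"
    have e: "G^2/b \<le> exp (G^2/b)" using exp_ge_add_one_self[of "G^2/b"] by linarith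
    have "G * exp (-(G^2)/b) = G / exp (G^2/b)" by (simp add: exp_minus field_simps)
    also have "\<dots> \<le> G / (G^2/b)" using G b e by (intro divide_left_mono) auto
    also have "\<dots> = b * inverse G" using G b by (simp add: field_simps power2_eq_square)
    finally show "G * exp (-(G^2)/b) \<le> b * inverse G" .
  qed
  show "((\<lambda>G. b * inverse G) \<longlongrightarrow> 0) at_top"
    using tendsto_mult_right_zero[OF tendsto_inverse_0_at_top[OF filterlim_ident]] by simp
qed simp

lemma g_bound:
  assumes a: "a > 0" and b: "b > 0" and y: "y \<ge> 0"
  shows "gfun a b y - y \<le> a * (1 + b)"
  using g_close[OF assms] xexp_bound[OF b g_props(1)[OF assms]] a
  by (smt (verit) mult_left_mono)

lemma g_at_top:
  assumes a: "a > 0" and b: "b > 0"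
  shows "filterlim (gfun a b) at_top at_top"
  by (rule filterlim_at_top_mono[OF filterlim_ident]) (auto intro!: eventually_at_top_linorderI[of 0] g_ge[OF a b])

lemma g_minus_tendsto:
  assumes a: "a > 0" and b: "b > 0"
  shows "((\<lambda>y. gfun a b y - y) \<longlongrightarrow> 0) at_top"
proof (rule tendsto_sandwich[of "\<lambda>_. 0" _ _ "\<lambda>y. a * (gfun a b y * exp (-((gfun a b y)^2)/b))"])
  show "\<forall>\<^sub>F y in at_top. 0 \<le> gfun a b y - y"
    by (intro eventually_at_top_linorderI[of 0]) (simp add: g_ge[OF a b])
  show "\<forall>\<^sub>F y in at_top. gfun a b y - y \<le> a * (gfun a b y * exp (-((gfun a b y)^2)/b))"
    by (intro eventually_at_top_linorderI[of 0]) (rule g_close[OF a b])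
  have "((\<lambda>G. G * exp (-(G^2)/b)) \<longlongrightarrow> 0) at_top" using b by (rule xexp_tendsto)
  then have "((\<lambda>y. gfun a b y * exp (-((gfun a b y)^2)/b)) \<longlongrightarrow> 0) at_top"
    using g_at_top[OF a b] by (rule filterlim_compose)
  then show "((\<lambda>y. a * (gfun a b y * exp (-((gfun a b y)^2)/b))) \<longlongrightarrow> 0) at_top"
    using tendsto_mult_right_zero by blast
qed simp


lemma gauss1_integrable:
  fixes c :: real assumes c: "c > 0"
  shows "integrable lborel (\<lambda>y::real. exp (- c * y^2))"
proof -
  define s where "s = sqrt (1 / (2 * c))"
  have s2: "s^2 = 1 / (2 * c)" using c by (simp add: s_def)
  have s0: "s > 0" using c by (simp add: s_def)
  have eq: "exp (- c * y^2) = sqrt (2 * pi * s^2) * normal_density 0 s y" for y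
  proof -
    have a: "2 * s^2 = 1/c" using s2 by simp
    have b: "- ((y - 0)^2) / (2 * s^2) = - c * y^2" using c unfolding a by simp
    have p: "sqrt (2 * pi * s^2) > 0" using s0 by simp
    have gen: "\<And>K z::real. K > 0 \<Longrightarrow> z = K * (1 / K * z)" by simp
    show ?thesis unfolding normal_density_def b by (rule gen[OF p])
  qed
  show ?thesis unfolding eq using s0 by simp
qed

lemma gauss1_nn:
  fixes c :: real assumes c: "c > 0"
  shows "(\<integral>\<^sup>+y. ennreal (exp (- c * y^2)) \<partial>lborel) < \<infinity>"
  using gauss1_integrable[OF c] unfolding integrable_iff_bounded by simp

lemma gauss_nn_finite:
  fixes c :: real assumes c: "c > 0"
  shows "(\<integral>\<^sup>+x. ennreal (exp (- c * (norm (x::'e::euclidean_space))^2)) \<partial>lborel) < \<infinity>"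
proof -
  have eq: "ennreal (exp (- c * (norm x)^2)) = (\<Prod>b\<in>Basis. ennreal (exp (- c * (x \<bullet> b)^2)))" for x :: 'e
  proof -
    have "(norm x)^2 = x \<bullet> x" by (simp add: power2_norm_eq_inner)
    also have "\<dots> = (\<Sum>b\<in>Basis. (x \<bullet> b) * (x \<bullet> b))" by (rule euclidean_inner)
    finally have "(norm x)^2 = (\<Sum>b\<in>Basis. (x \<bullet> b)^2)" by (simp add: power2_eq_square)
    then have "exp (- c * (norm x)^2) = (\<Prod>b\<in>Basis. exp (- c * (x \<bullet> b)^2))"
      by (simp add: sum_distrib_left exp_sum)
    then show ?thesis by (simp add: prod_ennreal)
  qed
  have "(\<integral>\<^sup>+x. ennreal (exp (- c * (norm (x::'e))^2)) \<partial>lborel)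
        = (\<Prod>b\<in>(Basis::'e set). (\<integral>\<^sup>+y. ennreal (exp (- c * y^2)) \<partial>lborel))"
    unfolding eq by (rule nn_integral_lborel_prod) auto
  also have "\<dots> < \<infinity>"
    using gauss1_nn[OF c] by (simp add: power_less_top_ennreal)
  finally show ?thesis .
qed


lemma exp_sq_tendsto:
  fixes b :: real assumes b: "b > 0"
  shows "((\<lambda>G. exp (-(G^2)/b)) \<longlongrightarrow> 0) at_top"
proof (rule tendsto_sandwich[of "\<lambda>_. 0" _ _ "\<lambda>G. G * exp (-(G^2)/b)"])
  show "\<forall>\<^sub>F G in at_top. 0 \<le> exp (-(G^2)/b)" by simp
  show "\<forall>\<^sub>F G in at_top. exp (-(G^2)/b) \<le> G * exp (-(G^2)/b)"
    by (intro eventually_at_top_linorderI[of 1]) simp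
  show "((\<lambda>G. G * exp (-(G^2)/b)) \<longlongrightarrow> 0) at_top" by (rule xexp_tendsto[OF b])
qed simp

lemma F1_tendsto:
  fixes \<alpha> \<sigma> K :: real and k :: nat
  assumes a: "\<alpha> > 0" and s: "\<sigma> > 0"
  shows "((\<lambda>G. (1 + exp (- \<alpha> * G\<^sup>2 / \<sigma>\<^sup>2 + K)) ^ k) \<longlongrightarrow> 1) at_top"
proof -
  have eq: "exp (- \<alpha> * G\<^sup>2 / \<sigma>\<^sup>2 + K) = exp K * exp (-(G^2)/(\<sigma>\<^sup>2/\<alpha>))" for G
  proof -
    have "- \<alpha> * G\<^sup>2 / \<sigma>\<^sup>2 + K = K + (-(G^2)/(\<sigma>\<^sup>2/\<alpha>))" using a s by (simp add: field_simps)
    then show ?thesis by (simp only: exp_add)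
  qed
  have "((\<lambda>G. exp (-(G^2)/(\<sigma>\<^sup>2/\<alpha>))) \<longlongrightarrow> 0) at_top"
    by (rule exp_sq_tendsto) (use a s in simp)
  then have "((\<lambda>G. exp K * exp (-(G^2)/(\<sigma>\<^sup>2/\<alpha>))) \<longlongrightarrow> exp K * 0) at_top"
    by (intro tendsto_intros)
  then have "((\<lambda>G. (1 + exp (- \<alpha> * G\<^sup>2 / \<sigma>\<^sup>2 + K)) ^ k) \<longlongrightarrow> (1 + exp K * 0) ^ k) at_top"
    unfolding eq by (rule tendsto_power[OF tendsto_add[OF tendsto_const]])
  then show ?thesis by simp
qed

lemma inv1exp_le: "inverse (1 + exp (y::real)) \<le> exp (- y)"
proof -
  have "exp y \<le> 1 + exp y" by simp
  then have "inverse (1 + exp y) \<le> inverse (exp y)" by (intro le_imp_inverse_le) auto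
  then show ?thesis by (simp add: exp_minus)
qed

lemma F2_tendsto:
  fixes \<alpha> \<sigma> K :: real
  assumes a: "\<alpha> > 0" and s: "\<sigma> > 0"
  shows "((\<lambda>G. inverse (1 + 2 * \<alpha> * G\<^sup>2 / \<sigma>\<^sup>2 * inverse (1 + exp (\<alpha> * G\<^sup>2 / \<sigma>\<^sup>2 - K)))) \<longlongrightarrow> 1) at_top"
proof -
  define X where "X G = 2 * \<alpha> * G\<^sup>2 / \<sigma>\<^sup>2 * inverse (1 + exp (\<alpha> * G\<^sup>2 / \<sigma>\<^sup>2 - K))" for G
  define b2 where "b2 = 2 * \<sigma>\<^sup>2 / \<alpha>"
  have b2: "b2 > 0" using a s by (simp add: b2_def)
  have "(X \<longlongrightarrow> 0) at_top"
  proof (rule tendsto_sandwich[of "\<lambda>_. 0" _ _ "\<lambda>G. (2 * \<alpha> / \<sigma>\<^sup>2 * exp K) * (G * exp (-(G^2)/b2))^2"])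
    show "\<forall>\<^sub>F G in at_top. 0 \<le> X G" using a by (simp add: X_def)
    show "\<forall>\<^sub>F G in at_top. X G \<le> (2 * \<alpha> / \<sigma>\<^sup>2 * exp K) * (G * exp (-(G^2)/b2))^2"
    proof (intro always_eventually allI)
      fix G :: real
      have c: "0 \<le> 2 * \<alpha> * G\<^sup>2 / \<sigma>\<^sup>2" using a by simp
      have "X G \<le> 2 * \<alpha> * G\<^sup>2 / \<sigma>\<^sup>2 * exp (- (\<alpha> * G\<^sup>2 / \<sigma>\<^sup>2 - K))"
        unfolding X_def by (rule mult_left_mono[OF inv1exp_le c])
      also have "\<dots> = (2 * \<alpha> / \<sigma>\<^sup>2 * exp K) * (G * exp (-(G^2)/b2))^2"
      proof -
        have "(exp (-(G^2)/b2))^2 = exp (- (\<alpha> * G\<^sup>2 / \<sigma>\<^sup>2))"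
          using a s by (simp add: b2_def power2_eq_square flip: exp_add)
        then show ?thesis by (simp add: power_mult_distrib exp_diff exp_minus field_simps)
      qed
      finally show "X G \<le> (2 * \<alpha> / \<sigma>\<^sup>2 * exp K) * (G * exp (-(G^2)/b2))^2" .
    qed
    have "((\<lambda>G. (2 * \<alpha> / \<sigma>\<^sup>2 * exp K) * (G * exp (-(G^2)/b2))^2) \<longlongrightarrow> (2 * \<alpha> / \<sigma>\<^sup>2 * exp K) * 0^2) at_top"
      by (intro tendsto_intros xexp_tendsto[OF b2])
    then show "((\<lambda>G. (2 * \<alpha> / \<sigma>\<^sup>2 * exp K) * (G * exp (-(G^2)/b2))^2) \<longlongrightarrow> 0) at_top" by simp
  qed simp
  then have "((\<lambda>G. inverse (1 + X G)) \<longlongrightarrow> inverse (1 + 0)) at_top"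
    by (intro tendsto_intros) auto
  then show ?thesis by (simp add: X_def)
qed

lemma exp_div_add: "exp (- x / c) * exp (- y / c) = exp (- (x + y) / (c::real))"
proof -
  have "- x / c + - y / c = - (x + y) / c" by (simp add: diff_divide_distrib)
  then show ?thesis by (simp only: mult_exp_exp)
qed

lemma at_infinity_seq_tendsto:
  fixes F :: "'v::real_normed_vector \<Rightarrow> 'c::topological_space"
  assumes H: "\<And>X. filterlim X at_infinity sequentially \<Longrightarrow> (\<lambda>n. F (X n)) \<longlonglongrightarrow> L"
  shows "(F \<longlongrightarrow> L) at_infinity"
proof (rule topological_tendstoI, rule ccontr)
  fix S assume S: "open S" "L \<in> S" and ne: "\<not> eventually (\<lambda>x. F x \<in> S) at_infinity"
  then have "\<forall>n::nat. \<exists>x. real n \<le> norm x \<and> F x \<notin> S"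
    unfolding eventually_at_infinity by (metis not_le)
  then obtain X where X: "\<And>n. real n \<le> norm (X n)" "\<And>n. F (X n) \<notin> S" by metis
  have "filterlim (\<lambda>n. norm (X n)) at_top sequentially"
    by (rule filterlim_at_top_mono[OF filterlim_real_sequentially]) (use X in auto)
  then have "filterlim X at_infinity sequentially" by (rule filterlim_norm_at_top_imp_at_infinity)
  from H[OF this] S have "eventually (\<lambda>n. F (X n) \<in> S) sequentially"
    by (auto simp: tendsto_def)
  then show False using X(2) by auto
qed

lemma mv_borel[measurable]:
  "f \<in> borel_measurable N \<Longrightarrow> (\<lambda>x. (M::real^'n^'m) *v f x) \<in> borel_measurable N"
  by (rule borel_measurable_continuous_on[OF linear_continuous_on[OF matrix_vector_mul_bounded_linear]])

lemma fst_borel[measurable]: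
  "f \<in> borel_measurable N \<Longrightarrow> (\<lambda>x. fst (f x :: 'x::topological_space \<times> 'y::topological_space)) \<in> borel_measurable N"
  by (rule borel_measurable_continuous_on[OF continuous_on_fst[OF continuous_on_id]])

lemma snd_borel[measurable]:
  "f \<in> borel_measurable N \<Longrightarrow> (\<lambda>x. snd (f x :: 'x::topological_space \<times> 'y::topological_space)) \<in> borel_measurable N"
  by (rule borel_measurable_continuous_on[OF continuous_on_snd[OF continuous_on_id]])

lemma dens_measure:
  fixes \<phi> Wb :: "'x::euclidean_space \<Rightarrow> real"
  assumes [measurable]: "\<phi> \<in> borel_measurable borel" and Wi: "integrable lborel Wb"
    and b: "\<And>t. \<bar>\<phi> t\<bar> \<le> Wb t" and A[measurable]: "A \<in> sets borel"
  shows "measure (density lborel (\<lambda>t. ennreal (\<phi> t))) A = (\<integral>t. indicator A t * max 0 (\<phi> t) \<partial>lborel)"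
proof -
  have int: "integrable lborel (\<lambda>t. indicator A t * max 0 (\<phi> t))"
  proof (rule Bochner_Integration.integrable_bound[OF Wi])
    show "(\<lambda>t. indicator A t * max 0 (\<phi> t)) \<in> borel_measurable lborel" by simp
    show "AE t in lborel. norm (indicator A t * max 0 (\<phi> t)) \<le> norm (Wb t)"
    proof (intro AE_I2)
      fix t
      have "\<bar>indicator A t * max 0 (\<phi> t)\<bar> \<le> \<bar>\<phi> t\<bar>" by (simp add: indicator_def abs_ge_self)
      also have "\<dots> \<le> \<bar>Wb t\<bar>" using b[of t] by simp
      finally show "norm (indicator A t * max 0 (\<phi> t)) \<le> norm (Wb t)" by simp
    qed
  qed
  have "emeasure (density lborel (\<lambda>t. ennreal (\<phi> t))) A = (\<integral>\<^sup>+t. ennreal (\<phi> t) * indicator A t \<partial>lborel)"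
    by (rule emeasure_density) auto
  also have "\<dots> = (\<integral>\<^sup>+t. ennreal (indicator A t * max 0 (\<phi> t)) \<partial>lborel)"
    by (intro nn_integral_cong) (auto simp: indicator_def max_def ennreal_neg)
  also have "\<dots> = ennreal (\<integral>t. indicator A t * max 0 (\<phi> t) \<partial>lborel)"
    by (rule nn_integral_eq_integral[OF int]) simp
  finally show ?thesis unfolding measure_def by (simp add: integral_nonneg)
qed

lemma tv_le:
  fixes g h Wb :: "'x::euclidean_space \<Rightarrow> real"
  assumes [measurable]: "g \<in> borel_measurable borel" "h \<in> borel_measurable borel"
    and Wi: "integrable lborel Wb" and bg: "\<And>t. \<bar>g t\<bar> \<le> Wb t" and bh: "\<And>t. \<bar>h t\<bar> \<le> Wb t"
  shows "0 \<le> tv_dist (density lborel (\<lambda>t. ennreal (g t))) (density lborel (\<lambda>t. ennreal (h t)))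
     \<and> tv_dist (density lborel (\<lambda>t. ennreal (g t))) (density lborel (\<lambda>t. ennreal (h t)))
        \<le> enn2real (\<integral>\<^sup>+t. ennreal \<bar>g t - h t\<bar> \<partial>lborel)"
proof -
  have intd: "integrable lborel (\<lambda>t. \<bar>g t - h t\<bar>)"
  proof (rule Bochner_Integration.integrable_bound[OF integrable_mult_right[OF Wi, of 2]])
    show "(\<lambda>t. \<bar>g t - h t\<bar>) \<in> borel_measurable lborel" by simp
    show "AE t in lborel. norm \<bar>g t - h t\<bar> \<le> norm (2 * Wb t)"
      using bg bh by (intro AE_I2) (smt (verit) real_norm_def)
  qed
  have D: "enn2real (\<integral>\<^sup>+t. ennreal \<bar>g t - h t\<bar> \<partial>lborel) = (\<integral>t. \<bar>g t - h t\<bar> \<partial>lborel)"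
    by (simp add: nn_integral_eq_integral[OF intd] integral_nonneg)
  define R where "R = (\<integral>t. \<bar>g t - h t\<bar> \<partial>lborel)"
  have each: "\<bar>measure (density lborel (\<lambda>t. ennreal (g t))) A - measure (density lborel (\<lambda>t. ennreal (h t))) A\<bar> \<le> R"
    if A: "A \<in> sets borel" for A
  proof -
    have ig: "integrable lborel (\<lambda>t. indicator A t * max 0 (g t))"
      by (rule Bochner_Integration.integrable_bound[OF Wi]) (use A bg in \<open>auto simp: indicator_def intro!: AE_I2\<close>,
          smt (verit) real_norm_def)
    have ih: "integrable lborel (\<lambda>t. indicator A t * max 0 (h t))"
      by (rule Bochner_Integration.integrable_bound[OF Wi]) (use A bh in \<open>auto simp: indicator_def intro!: AE_I2\<close>,
          smt (verit) real_norm_def)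
    have "measure (density lborel (\<lambda>t. ennreal (g t))) A - measure (density lborel (\<lambda>t. ennreal (h t))) A
        = (\<integral>t. indicator A t * max 0 (g t) - indicator A t * max 0 (h t) \<partial>lborel)"
      using dens_measure[OF _ Wi bg A] dens_measure[OF _ Wi bh A] ig ih by simp
    also have "\<bar>\<dots>\<bar> \<le> R" unfolding R_def
      by (rule integral_abs_bound_integral[OF Bochner_Integration.integrable_diff[OF ig ih] intd])
        (auto simp: indicator_def max_def)
    finally show ?thesis .
  qed
  have ne: "sets (borel :: 'x measure) \<noteq> {}" by auto
  have le: "tv_dist (density lborel (\<lambda>t. ennreal (g t))) (density lborel (\<lambda>t. ennreal (h t))) \<le> R"
    unfolding tv_dist_def by (rule cSUP_least[OF ne each])
  have ge: "0 \<le> tv_dist (density lborel (\<lambda>t. ennreal (g t))) (density lborel (\<lambda>t. ennreal (h t)))"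
    unfolding tv_dist_def
    by (rule cSUP_upper2[where x="{}"]) (auto intro!: bdd_aboveI2[where M=R] each)
  show ?thesis using le ge D R_def by simp
qed

context
  fixes \<sigma> \<alpha> :: real and Q :: "real^('a::finite+'b::finite)^('a+'b)"
  assumes sp: "\<sigma> > 0" and ap: "\<alpha> > 0" and pd: "pos_def_mat Q"
begin

definition "Pc = (2 * pi * \<sigma>\<^sup>2) powr (- real (CARD('a) + CARD('b)) / 2) * sqrt (det Q)"
definition "E1 (t :: (real^'a) \<times> (real^'b)) = exp (- (norm (mat_sqrt (blk11 Q) *v fst t
    + mat_isqrt (blk11 Q) *v (blk12 Q *v snd t)))\<^sup>2 / (2 * \<sigma>\<^sup>2))"
definition "aa = exp (2 * \<alpha> * real CARD('b))"
definition "bb = \<sigma>\<^sup>2 / \<alpha>"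
definition "Wv \<gamma> (t :: (real^'a) \<times> (real^'b)) = mat_sqrt (schur Q) *v (snd t + \<gamma>)"
definition "Gf \<gamma> t = gfun aa bb (norm (Wv \<gamma> t))"
definition "F1 G = (1 + exp (- \<alpha> * G\<^sup>2 / \<sigma>\<^sup>2 + 2 * \<alpha> * real CARD('b))) ^ CARD('b)"
definition "F2 G = inverse (1 + 2 * \<alpha> * G\<^sup>2 / \<sigma>\<^sup>2 * inverse (1 + exp (\<alpha> * G\<^sup>2 / \<sigma>\<^sup>2 - 2 * \<alpha> * real CARD('b))))"
definition "Zv \<gamma> t = (if Wv \<gamma> t = 0 then 0 else scaleR (Gf \<gamma> t / norm (Wv \<gamma> t)) (Wv \<gamma> t)) - mat_sqrt (schur Q) *v \<gamma>"

lemma fg_eq: "f_inf_gamma \<sigma> \<alpha> Q \<gamma> t = Pc * E1 t * F1 (Gf \<gamma> t) * F2 (Gf \<gamma> t) * exp (- (norm (Zv \<gamma> t))\<^sup>2 / (2 * \<sigma>\<^sup>2))"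
  unfolding f_inf_gamma_def Let_def Pc_def E1_def F1_def F2_def Zv_def Gf_def Wv_def aa_def bb_def schur_def
  by simp

lemma finf_eq: "f_inf_inf \<sigma> Q t = Pc * E1 t * exp (- (norm (mat_sqrt (schur Q) *v snd t))\<^sup>2 / (2 * \<sigma>\<^sup>2))"
proof -
  have "E1 t * exp (- (norm (mat_sqrt (schur Q) *v snd t))\<^sup>2 / (2 * \<sigma>\<^sup>2))
      = exp (- (joinv (fst t) (snd t) \<bullet> (Q *v joinv (fst t) (snd t))) / (2 * \<sigma>\<^sup>2))"
    unfolding E1_def quad_identity[OF pd, symmetric] by (rule exp_div_add)
  then show ?thesis unfolding f_inf_inf_def Let_def Pc_def by (simp add: mult.assoc)
qed

lemma aa_pos: "aa > 0" and bb_pos: "bb > 0"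
  using sp ap by (simp_all add: aa_def bb_def)

lemma Gf_ge: "norm (Wv \<gamma> t) \<le> Gf \<gamma> t"
  unfolding Gf_def by (rule g_ge[OF aa_pos bb_pos norm_ge_zero])

lemma Zv_bound: "norm (Zv \<gamma> t - mat_sqrt (schur Q) *v snd t) \<le> Gf \<gamma> t - norm (Wv \<gamma> t)"
proof -
  define D where "D = mat_sqrt (schur Q)"
  have W: "Wv \<gamma> t = D *v snd t + D *v \<gamma>" by (simp add: Wv_def D_def matrix_vector_right_distrib)
  show ?thesis
  proof (cases "Wv \<gamma> t = 0")
    case True
    then have "D *v snd t = - (D *v \<gamma>)" using W by (simp add: eq_neg_iff_add_eq_0)
    then have "Zv \<gamma> t - D *v snd t = 0" using True by (simp add: Zv_def D_def)
    then show ?thesis using Gf_ge[of \<gamma> t] by (simp add: D_def)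
  next
    case False
    then have nz: "norm (Wv \<gamma> t) > 0" by simp
    have "Zv \<gamma> t - D *v snd t = (Gf \<gamma> t / norm (Wv \<gamma> t) - 1) *\<^sub>R Wv \<gamma> t"
      using False unfolding Zv_def D_def[symmetric] by (simp add: W algebra_simps)
    then have "norm (Zv \<gamma> t - D *v snd t) = \<bar>Gf \<gamma> t / norm (Wv \<gamma> t) - 1\<bar> * norm (Wv \<gamma> t)" by simp
    also have "\<dots> = \<bar>Gf \<gamma> t - norm (Wv \<gamma> t)\<bar>"
      using nz by (simp add: abs_mult[symmetric] field_simps)
    also have "\<dots> = Gf \<gamma> t - norm (Wv \<gamma> t)" using Gf_ge[of \<gamma> t] by simp
    finally show ?thesis by (simp add: D_def)
  qed
qed

lemma Wv_at_top: "filterlim (\<lambda>\<gamma>. norm (Wv \<gamma> t)) at_top at_infinity"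
proof -
  obtain e where e: "e > 0" "\<And>x. e * norm x \<le> norm (mat_sqrt (schur Q) *v x)"
    using pd_lower[OF conjunct1[OF mat_sqrt_props[OF schur_pd[OF pd]]]] by blast
  show ?thesis unfolding filterlim_at_top eventually_at_infinity
  proof
    fix Z :: real
    show "\<exists>b. \<forall>x. b \<le> norm x \<longrightarrow> Z \<le> norm (Wv x t)"
    proof (intro exI allI impI)
      fix x :: "real^'b" assume x: "Z / e + norm (snd t) \<le> norm x"
      have "Z \<le> e * (norm x - norm (snd t))" using x e(1) by (simp add: field_simps)
      also have "\<dots> \<le> e * norm (snd t + x)" using e(1) norm_triangle_ineq2[of x "- snd t"]
        by (intro mult_left_mono) (auto simp: add.commute)
      also have "\<dots> \<le> norm (Wv x t)" unfolding Wv_def by (rule e(2))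
      finally show "Z \<le> norm (Wv x t)" .
    qed
  qed
qed

lemma pointwise: "((\<lambda>\<gamma>. f_inf_gamma \<sigma> \<alpha> Q \<gamma> t) \<longlongrightarrow> f_inf_inf \<sigma> Q t) at_infinity"
proof -
  note hW = Wv_at_top[of t]
  have hG: "filterlim (\<lambda>\<gamma>. Gf \<gamma> t) at_top at_infinity"
    unfolding Gf_def by (rule filterlim_compose[OF g_at_top[OF aa_pos bb_pos] hW])
  have hGW: "((\<lambda>\<gamma>. Gf \<gamma> t - norm (Wv \<gamma> t)) \<longlongrightarrow> 0) at_infinity"
    unfolding Gf_def by (rule filterlim_compose[OF g_minus_tendsto[OF aa_pos bb_pos] hW])
  have "((\<lambda>\<gamma>. Zv \<gamma> t - mat_sqrt (schur Q) *v snd t) \<longlongrightarrow> 0) at_infinity"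
    by (rule Lim_null_comparison[OF always_eventually hGW]) (simp add: Zv_bound)
  then have "((\<lambda>\<gamma>. Zv \<gamma> t - mat_sqrt (schur Q) *v snd t + mat_sqrt (schur Q) *v snd t)
      \<longlongrightarrow> 0 + mat_sqrt (schur Q) *v snd t) at_infinity"
    by (intro tendsto_intros)
  then have hZ: "((\<lambda>\<gamma>. Zv \<gamma> t) \<longlongrightarrow> mat_sqrt (schur Q) *v snd t) at_infinity" by simp
  have hF1: "((\<lambda>\<gamma>. F1 (Gf \<gamma> t)) \<longlongrightarrow> 1) at_infinity"
    unfolding F1_def by (rule filterlim_compose[OF F1_tendsto[OF ap sp] hG])
  have hF2: "((\<lambda>\<gamma>. F2 (Gf \<gamma> t)) \<longlongrightarrow> 1) at_infinity"
    unfolding F2_def by (rule filterlim_compose[OF F2_tendsto[OF ap sp] hG])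
  have "((\<lambda>\<gamma>. Pc * E1 t * F1 (Gf \<gamma> t) * F2 (Gf \<gamma> t) * exp (- (norm (Zv \<gamma> t))\<^sup>2 / (2 * \<sigma>\<^sup>2)))
      \<longlongrightarrow> Pc * E1 t * 1 * 1 * exp (- (norm (mat_sqrt (schur Q) *v snd t))\<^sup>2 / (2 * \<sigma>\<^sup>2))) at_infinity"
    by (intro tendsto_intros hF1 hF2 hZ) (use sp in simp)
  then show ?thesis unfolding fg_eq finf_eq by simp
qed

lemma F1_bound: "0 \<le> F1 G \<and> F1 G \<le> (1 + aa) ^ CARD('b)"
proof -
  have "- \<alpha> * G\<^sup>2 / \<sigma>\<^sup>2 \<le> 0" using ap sp by (simp add: divide_nonpos_pos)
  then have "exp (- \<alpha> * G\<^sup>2 / \<sigma>\<^sup>2 + 2 * \<alpha> * real CARD('b)) \<le> aa" unfolding aa_def by simp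
  then show ?thesis unfolding F1_def
    by (intro conjI zero_le_power power_mono) (auto intro: add_nonneg_nonneg less_imp_le)
qed

lemma F2_bound: "0 \<le> F2 G \<and> F2 G \<le> 1"
proof -
  define X where "X = 2 * \<alpha> * G\<^sup>2 / \<sigma>\<^sup>2 * inverse (1 + exp (\<alpha> * G\<^sup>2 / \<sigma>\<^sup>2 - 2 * \<alpha> * real CARD('b)))"
  have i: "0 \<le> inverse (1 + exp y)" for y :: real
    by (smt (verit) exp_gt_zero inverse_nonnegative_iff_nonnegative)
  have X: "0 \<le> X" unfolding X_def using ap
    by (intro mult_nonneg_nonneg divide_nonneg_nonneg i) auto
  have "inverse (1 + X) \<le> inverse 1" using X by (intro le_imp_inverse_le) auto
  then show ?thesis using X unfolding F2_def X_def[symmetric] by simp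
qed

lemma sq_lower:
  fixes d C z :: real
  assumes "0 \<le> d" "0 \<le> C" "0 \<le> z" "d - C \<le> z"
  shows "d^2/2 - C^2 \<le> z^2"
proof (cases "d \<le> C")
  case True
  then have "d^2 \<le> C^2" using assms by (intro power_mono) auto
  then show ?thesis using zero_le_power2[of C] zero_le_power2[of z] by linarith
next
  case False
  then have "(d - C)^2 \<le> z^2" using assms by (intro power_mono) auto
  moreover have "d^2/2 - C^2 \<le> (d - C)^2"
  proof -
    have "0 \<le> (d - 2*C)^2 / 2" by simp
    then show ?thesis by (simp add: power2_eq_square field_simps)
  qed
  ultimately show ?thesis by simp
qed

lemma dom_bound:
  "\<exists>Kc c. c > 0 \<and> Kc \<ge> 0 \<and> (\<forall>\<gamma> t. \<bar>f_inf_gamma \<sigma> \<alpha> Q \<gamma> t\<bar> \<le> Kc * exp (- c * (norm t)^2))"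
proof -
  obtain m where m: "m > 0" "\<And>x. m * (norm x)^2 \<le> x \<bullet> (Q *v x)" using pd_quad_lower[OF pd] by blast
  define C where "C = aa * (1 + bb)"
  have C0: "C \<ge> 0" using aa_pos bb_pos by (simp add: C_def)
  define c where "c = m / (4 * \<sigma>\<^sup>2)"
  define Kc where "Kc = \<bar>Pc\<bar> * (1 + aa) ^ CARD('b) * exp (C^2 / (2 * \<sigma>\<^sup>2))"
  have s2: "2 * \<sigma>\<^sup>2 > 0" using sp by simp
  have "\<bar>f_inf_gamma \<sigma> \<alpha> Q \<gamma> t\<bar> \<le> Kc * exp (- c * (norm t)^2)" for \<gamma> t
  proof -
    define A where "A = norm (mat_sqrt (blk11 Q) *v fst t + mat_isqrt (blk11 Q) *v (blk12 Q *v snd t))"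
    define d where "d = norm (mat_sqrt (schur Q) *v snd t)"
    define z where "z = norm (Zv \<gamma> t)"
    have "norm (Zv \<gamma> t - mat_sqrt (schur Q) *v snd t) \<le> C"
      using Zv_bound[of \<gamma> t] g_bound[OF aa_pos bb_pos norm_ge_zero, of "Wv \<gamma> t"]
      unfolding C_def Gf_def by simp
    moreover have "d \<le> z + norm (Zv \<gamma> t - mat_sqrt (schur Q) *v snd t)"
      unfolding d_def z_def by (metis norm_minus_commute norm_triangle_sub add.commute)
    ultimately have "d - C \<le> z" by simp
    then have zl: "d^2/2 - C^2 \<le> z^2" using C0 by (intro sq_lower) (auto simp: d_def z_def)
    have q: "A^2 + d^2 \<ge> m * (norm t)^2"
    proof -
      have "A^2 + d^2 = joinv (fst t) (snd t) \<bullet> (Q *v joinv (fst t) (snd t))"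
        unfolding A_def d_def by (rule quad_identity[OF pd])
      moreover have "norm (joinv (fst t) (snd t)) = norm t" by (simp add: join_norm)
      ultimately show ?thesis using m(2)[of "joinv (fst t) (snd t)"] by simp
    qed
    have key: "m * (norm t)^2 / 2 - C^2 \<le> A^2 + z^2"
      using q zl zero_le_power2[of A] by linarith
    have E: "E1 t * exp (- (norm (Zv \<gamma> t))\<^sup>2 / (2 * \<sigma>\<^sup>2)) \<le> exp (C^2 / (2 * \<sigma>\<^sup>2)) * exp (- c * (norm t)^2)"
    proof -
      have "E1 t * exp (- (norm (Zv \<gamma> t))\<^sup>2 / (2 * \<sigma>\<^sup>2)) = exp (- (A^2 + z^2) / (2 * \<sigma>\<^sup>2))"
        unfolding E1_def A_def[symmetric] z_def[symmetric] by (rule exp_div_add)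
      also have "\<dots> \<le> exp (- (m * (norm t)^2 / 2 - C^2) / (2 * \<sigma>\<^sup>2))"
        using key s2 by (simp add: divide_right_mono)
      also have "\<dots> = exp (C^2 / (2 * \<sigma>\<^sup>2)) * exp (- c * (norm t)^2)"
        unfolding c_def using sp by (simp add: field_simps flip: exp_add)
      finally show ?thesis .
    qed
    have FF: "F1 (Gf \<gamma> t) * F2 (Gf \<gamma> t) \<le> (1 + aa) ^ CARD('b)"
      using F1_bound[of "Gf \<gamma> t"] F2_bound[of "Gf \<gamma> t"] by (smt (verit) mult_left_le mult_nonneg_nonneg)
    have "\<bar>f_inf_gamma \<sigma> \<alpha> Q \<gamma> t\<bar> = \<bar>Pc\<bar> * ((F1 (Gf \<gamma> t) * F2 (Gf \<gamma> t)) * (E1 t * exp (- (norm (Zv \<gamma> t))\<^sup>2 / (2 * \<sigma>\<^sup>2))))"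
      unfolding fg_eq using F1_bound[of "Gf \<gamma> t"] F2_bound[of "Gf \<gamma> t"]
      by (simp add: abs_mult E1_def mult_ac)
    also have "\<dots> \<le> \<bar>Pc\<bar> * ((1 + aa) ^ CARD('b) * (exp (C^2 / (2 * \<sigma>\<^sup>2)) * exp (- c * (norm t)^2)))"
      using aa_pos by (intro mult_left_mono[OF mult_mono[OF FF E]]) (auto simp: E1_def)
    also have "\<dots> = Kc * exp (- c * (norm t)^2)" by (simp add: Kc_def mult_ac)
    finally show ?thesis .
  qed
  moreover have "c > 0" using m sp by (simp add: c_def)
  moreover have "Kc \<ge> 0" using aa_pos by (simp add: Kc_def)
  ultimately show ?thesis by blast
qed

lemma Gf_meas: "(\<lambda>t. Gf \<gamma> t) \<in> borel_measurable borel"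
proof -
  define gm where "gm y = gfun aa bb (max 0 y)" for y
  have "mono gm" unfolding gm_def mono_def
    by (intro allI impI g_mono[OF aa_pos bb_pos]) auto
  then have [measurable]: "gm \<in> borel_measurable borel" by (rule borel_measurable_mono)
  have eq: "Gf \<gamma> t = gm (norm (Wv \<gamma> t))" for t by (simp add: gm_def Gf_def)
  show ?thesis unfolding eq Wv_def by measurable
qed

lemma fg_meas: "(\<lambda>t. f_inf_gamma \<sigma> \<alpha> Q \<gamma> t) \<in> borel_measurable borel"
proof -
  note Gf_meas[measurable]
  show ?thesis unfolding fg_eq E1_def F1_def F2_def Zv_def Wv_def by measurable
qed

lemma finf_meas: "(\<lambda>t. f_inf_inf \<sigma> Q t) \<in> borel_measurable borel"
  unfolding finf_eq E1_def by measurable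

lemma final:
  "(\<forall>t :: (real^'a) \<times> (real^'b).
      ((\<lambda>\<gamma>. f_inf_gamma \<sigma> \<alpha> Q \<gamma> t) \<longlongrightarrow> f_inf_inf \<sigma> Q t) at_infinity)
   \<and> ((\<lambda>\<gamma>. \<integral>\<^sup>+ t. ennreal \<bar>f_inf_gamma \<sigma> \<alpha> Q \<gamma> t - f_inf_inf \<sigma> Q t\<bar> \<partial>lborel)
        \<longlongrightarrow> 0) at_infinity
   \<and> ((\<lambda>\<gamma>. tv_dist (density lborel (\<lambda>t. ennreal (f_inf_gamma \<sigma> \<alpha> Q \<gamma> t)))
                      (density lborel (\<lambda>t. ennreal (f_inf_inf \<sigma> Q t))))
        \<longlongrightarrow> 0) at_infinity"
proof -
  obtain Kc c where c: "c > 0" and Kc: "Kc \<ge> 0"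
    and bnd: "\<And>\<gamma> t. \<bar>f_inf_gamma \<sigma> \<alpha> Q \<gamma> t\<bar> \<le> Kc * exp (- c * (norm t)^2)"
    using dom_bound by blast
  define Wb where "Wb t = Kc * exp (- c * (norm (t :: (real^'a) \<times> (real^'b)))^2)" for t
  have Wm[measurable]: "Wb \<in> borel_measurable borel" unfolding Wb_def by measurable
  have Wfin: "(\<integral>\<^sup>+t. ennreal (Wb t) \<partial>lborel) < \<infinity>"
  proof -
    have "(\<integral>\<^sup>+t. ennreal (Wb t) \<partial>lborel) = ennreal Kc * (\<integral>\<^sup>+t. ennreal (exp (- c * (norm (t :: (real^'a) \<times> (real^'b)))^2)) \<partial>lborel)"
      unfolding Wb_def using Kc by (simp add: ennreal_mult nn_integral_cmult)
    also have "\<dots> < \<infinity>" using gauss_nn_finite[OF c, where 'e="(real^'a) \<times> (real^'b)"] by (simp add: ennreal_mult_less_top)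
    finally show ?thesis .
  qed
  have Wi: "integrable lborel Wb"
    using Wfin Kc by (intro integrableI_bounded) (auto simp: Wb_def)
  note pw = pointwise
  have bnd_inf: "\<bar>f_inf_inf \<sigma> Q t\<bar> \<le> Wb t" for t
  proof (rule tendsto_le[OF trivial_limit_at_infinity tendsto_const])
    show "((\<lambda>\<gamma>. \<bar>f_inf_gamma \<sigma> \<alpha> Q \<gamma> t\<bar>) \<longlongrightarrow> \<bar>f_inf_inf \<sigma> Q t\<bar>) at_infinity"
      by (intro tendsto_intros pw)
    show "\<forall>\<^sub>F \<gamma> in at_infinity. \<bar>f_inf_gamma \<sigma> \<alpha> Q \<gamma> t\<bar> \<le> Wb t"
      using bnd by (simp add: Wb_def)
  qed
  have bndW: "\<bar>f_inf_gamma \<sigma> \<alpha> Q \<gamma> t\<bar> \<le> Wb t" for \<gamma> t using bnd by (simp add: Wb_def)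
  have L1: "((\<lambda>\<gamma>. \<integral>\<^sup>+ t. ennreal \<bar>f_inf_gamma \<sigma> \<alpha> Q \<gamma> t - f_inf_inf \<sigma> Q t\<bar> \<partial>lborel) \<longlongrightarrow> 0) at_infinity"
  proof (rule at_infinity_seq_tendsto)
    fix X :: "nat \<Rightarrow> real^'b" assume hX: "filterlim X at_infinity sequentially"
    note [measurable] = fg_meas finf_meas
    have "(\<lambda>n. \<integral>\<^sup>+ t. norm (f_inf_inf \<sigma> Q t - f_inf_gamma \<sigma> \<alpha> Q (X n) t) \<partial>lborel) \<longlonglongrightarrow> 0"
    proof (rule nn_integral_dominated_convergence_norm[where w=Wb])
      show "\<And>j. AE t in lborel. norm (f_inf_gamma \<sigma> \<alpha> Q (X j) t) \<le> Wb t"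
        using bndW by simp
      show "(\<integral>\<^sup>+ t. ennreal (Wb t) \<partial>lborel) < \<infinity>" by (rule Wfin)
      show "AE t in lborel. (\<lambda>n. f_inf_gamma \<sigma> \<alpha> Q (X n) t) \<longlonglongrightarrow> f_inf_inf \<sigma> Q t"
        using filterlim_compose[OF pw hX] by simp
    qed simp_all
    then show "(\<lambda>n. \<integral>\<^sup>+ t. ennreal \<bar>f_inf_gamma \<sigma> \<alpha> Q (X n) t - f_inf_inf \<sigma> Q t\<bar> \<partial>lborel) \<longlonglongrightarrow> 0"
      by (simp add: abs_minus_commute)
  qed
  have TV: "((\<lambda>\<gamma>. tv_dist (density lborel (\<lambda>t. ennreal (f_inf_gamma \<sigma> \<alpha> Q \<gamma> t)))
                      (density lborel (\<lambda>t. ennreal (f_inf_inf \<sigma> Q t)))) \<longlongrightarrow> 0) at_infinity"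
  proof (rule tendsto_sandwich[OF always_eventually always_eventually tendsto_const])
    note tv = tv_le[OF fg_meas finf_meas Wi bndW bnd_inf]
    show "\<forall>\<gamma>. 0 \<le> tv_dist (density lborel (\<lambda>t. ennreal (f_inf_gamma \<sigma> \<alpha> Q \<gamma> t)))
                      (density lborel (\<lambda>t. ennreal (f_inf_inf \<sigma> Q t)))" using tv by blast
    show "\<forall>\<gamma>. tv_dist (density lborel (\<lambda>t. ennreal (f_inf_gamma \<sigma> \<alpha> Q \<gamma> t)))
                      (density lborel (\<lambda>t. ennreal (f_inf_inf \<sigma> Q t)))
           \<le> enn2real (\<integral>\<^sup>+ t. ennreal \<bar>f_inf_gamma \<sigma> \<alpha> Q \<gamma> t - f_inf_inf \<sigma> Q t\<bar> \<partial>lborel)"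
      using tv by blast
    show "((\<lambda>\<gamma>. enn2real (\<integral>\<^sup>+ t. ennreal \<bar>f_inf_gamma \<sigma> \<alpha> Q \<gamma> t - f_inf_inf \<sigma> Q t\<bar> \<partial>lborel)) \<longlongrightarrow> 0) at_infinity"
      using tendsto_enn2real[of _ 0] L1 by simp
  qed
  show ?thesis using pw L1 TV by blast
qed

end

theorem mainTheorem7:
  fixes \<sigma> \<alpha> :: real and Q :: "real^('a::finite + 'b::finite)^('a + 'b)"
  assumes "\<sigma> > 0" and "\<alpha> > 0" and "pos_def_mat Q"
  shows "(\<forall>t :: (real^'a) \<times> (real^'b).
            ((\<lambda>\<gamma>. f_inf_gamma \<sigma> \<alpha> Q \<gamma> t) \<longlongrightarrow> f_inf_inf \<sigma> Q t) at_infinity)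
       \<and> ((\<lambda>\<gamma>. \<integral>\<^sup>+ t. ennreal \<bar>f_inf_gamma \<sigma> \<alpha> Q \<gamma> t - f_inf_inf \<sigma> Q t\<bar> \<partial>lborel)
            \<longlongrightarrow> 0) at_infinity
       \<and> ((\<lambda>\<gamma>. tv_dist (density lborel (\<lambda>t. ennreal (f_inf_gamma \<sigma> \<alpha> Q \<gamma> t)))
                          (density lborel (\<lambda>t. ennreal (f_inf_inf \<sigma> Q t))))
            \<longlongrightarrow> 0) at_infinity"
  by (rule final[OF assms])

end
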